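(* Let $G(1)=(V(1),E(1))$ be a neutral graph, let $G(2)=(V(2),E(2))$ be a $k$-regular graph, and let $\alpha\geq 2$ and $\beta\geq 1$ be integers with $2(\alpha-1)|E(1)|=\beta|V(2)|$. Let $G^{\oplus}$ be a simple graph obtained from the disjoint union of $G(1)$ and $G(2)$ by adding edges between $V(1)$ and $V(2)$ so that each vertex $u\in V(1)$ is incident to exactly $(\alpha-1)d_u$ added edges (with $d_u$ the degree of $u$ in $G(1)$) and each vertex of $V(2)$ is incident to exactly $\beta$ added edges. If $$\frac{|E(2)|}{|E(1)|}=(\alpha-1)^{2}=\Big(\frac{k}{\beta}\Big)^{2}=\Big(\frac{|V(2)|}{|V(1)|}\Big)^{2},$$ then $G^{\oplus}$ is neutral.
   Context: All graphs are finite, simple and connected. (In the paper's description, $\beta$ "incomplete edges" emanate from each vertex of $G(2)$, and for each edge of $G(1)$, $\alpha-1$ incomplete edges emanate from each of its endvertices; incomplete edges of $G(1)$ are merged one-to-one with incomplete edges of $G(2)$ until none is left.) For a graph $G=(V,E)$ with $m=|E|\geq1$ and degrees $d_u$, the assortativity coefficient is $$r(G)=\frac{m^{-1}\sum_{e_{uv}\in E} d_{u}d_{v}-\Big[m^{-1}\sum_{e_{uv}\in E} \tfrac{1}{2}(d_{u}+d_{v})\Big]^{2}}{m^{-1}\sum_{e_{uv}\in E} \tfrac{1}{2}(d^{2}_{u}+d^{2}_{v})-\Big[m^{-1}\sum_{e_{uv}\in E} \tfrac{1}{2}(d_{u}+d_{v})\Big]^{2}},$$ sums over edges counting each edge once,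 defined whenever the denominator is nonzero; $G$ is neutral if $r(G)$ is defined and equals $0$. *)

theory Defs
  imports Main Complex_Main
begin

definition simple_graph :: "'a set \<Rightarrow> 'a set set \<Rightarrow> bool" where
  "simple_graph V E \<longleftrightarrow> finite V \<and>
     (\<forall>e\<in>E. \<exists>u v. u \<noteq> v \<and> u \<in> V \<and> v \<in> V \<and> e = {u, v})"

definition adj :: "'a set set \<Rightarrow> 'a \<Rightarrow> 'a \<Rightarrow> bool" where
  "adj E u v \<longleftrightarrow> {u, v} \<in> E"

definition connected_graph :: "'a set \<Rightarrow> 'a set set \<Rightarrow> bool" where
  "connected_graph V E \<longleftrightarrow> V \<noteq> {} \<and> (\<forall>u\<in>V. \<forall>v\<in>V. (adj E)\<^sup>*\<^sup>* u v)"

definition graph :: "'a set \<Rightarrow> 'a set set \<Rightarrow> bool" where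
  "graph V E \<longleftrightarrow> simple_graph V E \<and> connected_graph V E"

definition deg :: "'a set set \<Rightarrow> 'a \<Rightarrow> nat" where
  "deg E u = card {e \<in> E. u \<in> e}"

text \<open>For an edge e = {u,v}: product over e of degrees is d_u d_v, sum is d_u + d_v,
  sum of squares is d_u^2 + d_v^2. Sums run over edges, each edge once.\<close>

definition mean_deg :: "'a set set \<Rightarrow> real" where
  "mean_deg E = (\<Sum>e\<in>E. (1/2) * (\<Sum>u\<in>e. real (deg E u))) / real (card E)"

definition assort_num :: "'a set set \<Rightarrow> real" where
  "assort_num E = (\<Sum>e\<in>E. (\<Prod>u\<in>e. real (deg E u))) / real (card E) - (mean_deg E)\<^sup>2"

definition assort_den :: "'a set set \<Rightarrow> real" where
  "assort_den E = (\<Sum>e\<in>E. (1/2) * (\<Sum>u\<in>e. (real (deg E u))\<^sup>2)) / real (card E) - (mean_deg E)\<^sup>2"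

definition assortativity :: "'a set set \<Rightarrow> real" where
  "assortativity E = assort_num E / assort_den E"

definition neutral :: "'a set \<Rightarrow> 'a set set \<Rightarrow> bool" where
  "neutral V E \<longleftrightarrow> card E \<ge> 1 \<and> assort_den E \<noteq> 0 \<and> assortativity E = 0"

definition regular :: "'a set \<Rightarrow> 'a set set \<Rightarrow> nat \<Rightarrow> bool" where
  "regular V E k \<longleftrightarrow> (\<forall>v\<in>V. deg E v = k)"

end

theory Submission
  imports Defs
begin

lemma sum_swap_edges:
  fixes g :: "'a \<Rightarrow> real"
  assumes "finite V" "finite E" "\<forall>e\<in>E. e \<subseteq> V"
  shows "(\<Sum>e\<in>E. \<Sum>u\<in>e. g u) = (\<Sum>u\<in>V. g u * real (card {e\<in>E. u\<in>e}))"
proof -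
  have "(\<Sum>e\<in>E. \<Sum>u\<in>e. g u) = (\<Sum>e\<in>E. \<Sum>u\<in>V. if u\<in>e then g u else 0)"
  proof (rule sum.cong[OF refl])
    fix e assume "e\<in>E"
    hence "V \<inter> e = e" using assms by auto
    thus "(\<Sum>u\<in>e. g u) = (\<Sum>u\<in>V. if u\<in>e then g u else 0)"
      using sum.inter_restrict[OF assms(1), of g e] by simp
  qed
  also have "\<dots> = (\<Sum>u\<in>V. \<Sum>e\<in>E. if u\<in>e then g u else 0)" by (rule sum.swap)
  also have "\<dots> = (\<Sum>u\<in>V. g u * real (card {e\<in>E. u\<in>e}))"
  proof (rule sum.cong[OF refl])
    fix u assume "u\<in>V"
    have "(\<Sum>e\<in>E. if u\<in>e then g u else 0) = (\<Sum>e\<in>{e\<in>E. u\<in>e}. g u)"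
      using sum.inter_filter[OF assms(2), of "\<lambda>_. g u" "\<lambda>e. u\<in>e"] by simp
    thus "(\<Sum>e\<in>E. if u\<in>e then g u else 0) = g u * real (card {e\<in>E. u\<in>e})" by simp
  qed
  finally show ?thesis .
qed

theorem lemma7:
  fixes V1 V2 :: "'a set" and E1 E2 F :: "'a set set" and k \<alpha> \<beta> :: nat
  assumes G1: "graph V1 E1" and G2: "graph V2 E2"
    and disj: "V1 \<inter> V2 = {}"
    and neut: "neutral V1 E1"
    and reg: "regular V2 E2 k"
    and alpha: "\<alpha> \<ge> 2" and beta: "\<beta> \<ge> 1"
    and count: "2 * (\<alpha> - 1) * card E1 = \<beta> * card V2"
    and F_cross: "F \<subseteq> {{u, v} | u v. u \<in> V1 \<and> v \<in> V2}"
    and F_V1: "\<forall>u\<in>V1. card {e \<in> F. u \<in> e} = (\<alpha> - 1) * deg E1 u"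
    and F_V2: "\<forall>v\<in>V2. card {e \<in> F. v \<in> e} = \<beta>"
    and r1: "real (card E2) / real (card E1) = (real \<alpha> - 1)\<^sup>2"
    and r2: "(real \<alpha> - 1)\<^sup>2 = (real k / real \<beta>)\<^sup>2"
    and r3: "(real k / real \<beta>)\<^sup>2 = (real (card V2) / real (card V1))\<^sup>2"
  shows "neutral (V1 \<union> V2) (E1 \<union> E2 \<union> F)"
proof -
  define E where "E = E1 \<union> E2 \<union> F"
  have sg1: "simple_graph V1 E1" and sg2: "simple_graph V2 E2" using G1 G2 by (auto simp: graph_def)
  have finV1: "finite V1" and e1: "\<forall>e\<in>E1. \<exists>u v. u\<noteq>v \<and> u\<in>V1 \<and> v\<in>V1 \<and> e={u,v}"
    using sg1 by (auto simp: simple_graph_def)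
  have finV2: "finite V2" and e2: "\<forall>e\<in>E2. \<exists>u v. u\<noteq>v \<and> u\<in>V2 \<and> v\<in>V2 \<and> e={u,v}"
    using sg2 by (auto simp: simple_graph_def)
  have eF: "\<forall>e\<in>F. \<exists>u v. u\<noteq>v \<and> u\<in>V1 \<and> v\<in>V2 \<and> e={u,v}" proof
    fix e assume "e \<in> F"
    then obtain u v where "u \<in> V1" "v \<in> V2" "e = {u,v}" using F_cross by blast
    moreover have "u \<noteq> v" using calculation disj by blast
    ultimately show "\<exists>u v. u\<noteq>v \<and> u\<in>V1 \<and> v\<in>V2 \<and> e={u,v}" by blast
  qed
  have sub1: "\<forall>e\<in>E1. e \<subseteq> V1" using e1 by fastforce
  have sub2: "\<forall>e\<in>E2. e \<subseteq> V2" using e2 by fastforce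
  have subF: "\<forall>e\<in>F. e \<subseteq> V1 \<union> V2" using eF by fastforce
  have finV: "finite (V1 \<union> V2)" using finV1 finV2 by simp
  have finE1: "finite E1" using sub1 finV1 by (meson Pow_iff finite_Pow_iff finite_subset subsetI)
  have finE2: "finite E2" using sub2 finV2 by (meson Pow_iff finite_Pow_iff finite_subset subsetI)
  have finF: "finite F" using subF finV by (meson Pow_iff finite_Pow_iff finite_subset subsetI)
  have d12: "E1 \<inter> E2 = {}"
  proof (rule ccontr)
    assume "E1 \<inter> E2 \<noteq> {}"
    then obtain e where "e \<in> E1" "e \<in> E2" by blast
    then obtain u v where "u\<in>V1" "e={u,v}" using e1 by fastforce
    thus False using \<open>e \<in> E2\<close> sub2 disj by blast
  qed
  have d3: "(E1 \<union> E2) \<inter> F = {}"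
  proof (rule ccontr)
    assume "(E1 \<union> E2) \<inter> F \<noteq> {}"
    then obtain e where "e \<in> F" "e \<in> E1 \<or> e \<in> E2" by blast
    then obtain u v where "u\<in>V1" "v\<in>V2" "e={u,v}" using eF by fastforce
    thus False using \<open>e \<in> E1 \<or> e \<in> E2\<close> sub1 sub2 disj by blast
  qed
  have sumE: "(\<Sum>e\<in>E. h e) = (\<Sum>e\<in>E1. h e) + (\<Sum>e\<in>E2. h e) + (\<Sum>e\<in>F. h e)" for h :: "'a set \<Rightarrow> real"
    unfolding E_def using finE1 finE2 finF d12 d3 by (simp add: sum.union_disjoint)
  have cardE: "card E = card E1 + card E2 + card F"
    unfolding E_def using finE1 finE2 finF d12 d3 by (simp add: card_Un_disjoint)
  have sumV: "(\<Sum>x\<in>V1\<union>V2. h x) = (\<Sum>x\<in>V1. h x) + (\<Sum>x\<in>V2. h x)" for h :: "'a \<Rightarrow> real"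
    using finV1 finV2 disj by (simp add: sum.union_disjoint)
  have degV1: "deg E x = \<alpha> * deg E1 x" if x: "x \<in> V1" for x
  proof -
    have "{e\<in>E. x\<in>e} = {e\<in>E1. x\<in>e} \<union> {e\<in>F. x\<in>e}" using sub2 disj x unfolding E_def by auto
    moreover have "{e\<in>E1. x\<in>e} \<inter> {e\<in>F. x\<in>e} = {}" using d3 by blast
    ultimately have "deg E x = deg E1 x + card {e\<in>F. x\<in>e}"
      unfolding deg_def using finE1 finF by (simp add: card_Un_disjoint)
    also have "\<dots> = deg E1 x + (\<alpha> - 1) * deg E1 x" using F_V1 x by simp
    also have "\<dots> = \<alpha> * deg E1 x" proof -
      obtain j where "\<alpha> = Suc j" using alpha by (cases \<alpha>) auto
      thus ?thesis by simp
    qed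
    finally show ?thesis .
  qed
  have degV2: "deg E x = k + \<beta>" if x: "x \<in> V2" for x
  proof -
    have "{e\<in>E. x\<in>e} = {e\<in>E2. x\<in>e} \<union> {e\<in>F. x\<in>e}" using sub1 disj x unfolding E_def by auto
    moreover have "{e\<in>E2. x\<in>e} \<inter> {e\<in>F. x\<in>e} = {}" using d3 by blast
    ultimately have "deg E x = deg E2 x + card {e\<in>F. x\<in>e}"
      unfolding deg_def using finE2 finF by (simp add: card_Un_disjoint)
    thus ?thesis using F_V2 reg x by (simp add: regular_def)
  qed
  define a where "a = real (\<alpha> - 1)"
  define b where "b = real \<beta>"
  have ra: "real \<alpha> = a + 1" using alpha unfolding a_def by (simp add: of_nat_diff)
  have a1: "a \<ge> 1" using alpha unfolding a_def by simp
  have b1: "b \<ge> 1" using beta unfolding b_def by simp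
  have "a = real k / b" using r2 ra a1 b1 unfolding b_def by simp
  hence kab: "real k = a * b" using b1 by (simp add: field_simps)
  define D where "D x = real (deg E1 x)" for x
  define Dg where "Dg x = real (deg E x)" for x
  have Dg1: "Dg x = (a+1) * D x" if "x \<in> V1" for x
    using degV1[OF that] ra unfolding Dg_def D_def by simp
  have Dg2: "Dg x = (a+1) * b" if "x \<in> V2" for x
    using degV2[OF that] kab unfolding Dg_def b_def by (simp add: algebra_simps)
  have cF1: "real (card {e\<in>F. x\<in>e}) = a * D x" if "x \<in> V1" for x
    using F_V1 that unfolding a_def D_def by simp
  have cF2: "real (card {e\<in>F. x\<in>e}) = b" if "x \<in> V2" for x
    using F_V2 that unfolding b_def by simp
  have cE1: "real (card {e\<in>E1. x\<in>e}) = D x" for x unfolding D_def deg_def by simp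
  define m1 where "m1 = real (card E1)"
  define m2 where "m2 = real (card E2)"
  define f where "f = real (card F)"
  define n2 where "n2 = real (card V2)"
  have m1pos: "m1 > 0" using neut unfolding neutral_def m1_def by simp
  have m2v: "m2 = a^2 * m1" using r1 ra m1pos unfolding m1_def m2_def by (simp add: field_simps)
  have nb: "b * n2 = 2*a*m1"
  proof -
    have "real (2 * (\<alpha> - 1) * card E1) = real (\<beta> * card V2)" using count by simp
    thus ?thesis unfolding a_def b_def m1_def n2_def by simp
  qed
  define A2 where "A2 = (\<Sum>x\<in>V1. D x * D x)"
  define A3 where "A3 = (\<Sum>x\<in>V1. (D x)^2 * D x)"
  define S1 where "S1 = (\<Sum>e\<in>E1. \<Prod>u\<in>e. D u)"
  define T1 where "T1 = (\<Sum>e\<in>E1. (1/2) * (\<Sum>u\<in>e. D u))"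
  define Q1 where "Q1 = (\<Sum>e\<in>E1. (1/2) * (\<Sum>u\<in>e. (D u)^2))"
  have T1A: "T1 = A2/2"
  proof -
    have "(\<Sum>e\<in>E1. \<Sum>u\<in>e. D u) = A2"
      using sum_swap_edges[OF finV1 finE1 sub1, of D] cE1 unfolding A2_def by simp
    thus ?thesis unfolding T1_def by (simp add: sum_divide_distrib[symmetric] sum_distrib_left[symmetric])
  qed
  have Q1A: "Q1 = A3/2"
  proof -
    have "(\<Sum>e\<in>E1. \<Sum>u\<in>e. (D u)^2) = A3"
      using sum_swap_edges[OF finV1 finE1 sub1, of "\<lambda>u. (D u)^2"] cE1 unfolding A3_def by simp
    thus ?thesis unfolding Q1_def by (simp add: sum_divide_distrib[symmetric] sum_distrib_left[symmetric])
  qed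
  have num1: "assort_num E1 = S1/m1 - (T1/m1)^2"
    unfolding assort_num_def mean_deg_def S1_def T1_def m1_def D_def by simp
  have den1: "assort_den E1 = Q1/m1 - (T1/m1)^2"
    unfolding assort_den_def mean_deg_def Q1_def T1_def m1_def D_def by simp
  have S1v: "S1/m1 = (T1/m1)^2" and den1nz: "Q1/m1 - (T1/m1)^2 \<noteq> 0"
    using neut num1 den1 unfolding neutral_def assortativity_def by auto
  define \<mu> where "\<mu> = T1/m1"
  have CS: "Q1/m1 - \<mu>^2 \<ge> 0"
  proof -
    have pe: "(1/2)*(\<Sum>u\<in>e. (D u - \<mu>)^2) = (1/2)*(\<Sum>u\<in>e. (D u)^2) - 2*\<mu>*((1/2)*(\<Sum>u\<in>e. D u)) + \<mu>^2"
      if "e \<in> E1" for e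
    proof -
      obtain u v where "u\<noteq>v" "e={u,v}" using bspec[OF e1 \<open>e \<in> E1\<close>] by blast
      thus ?thesis by (simp add: power2_diff algebra_simps)
    qed
    have "0 \<le> (\<Sum>e\<in>E1. (1/2)*(\<Sum>u\<in>e. (D u - \<mu>)^2))"
      by (intro sum_nonneg) (simp add: sum_nonneg)
    also have "\<dots> = (\<Sum>e\<in>E1. (1/2)*(\<Sum>u\<in>e. (D u)^2) - 2*\<mu>*((1/2)*(\<Sum>u\<in>e. D u)) + \<mu>^2)"
      using pe by (rule sum.cong[OF refl])
    also have "\<dots> = Q1 - 2*\<mu>*T1 + \<mu>^2*m1"
      unfolding Q1_def T1_def m1_def by (simp add: sum.distrib sum_subtractf sum_distrib_left)
    finally have "0 \<le> Q1 - 2*\<mu>*T1 + \<mu>^2*m1" .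
    hence "0 \<le> (Q1 - 2*\<mu>*T1 + \<mu>^2*m1)/m1" using m1pos by simp
    also have "\<dots> = Q1/m1 - \<mu>^2" unfolding \<mu>_def using m1pos by (simp add: field_simps power2_eq_square)
    finally show ?thesis .
  qed
  have E1s: "(\<Sum>e\<in>E1. \<Sum>u\<in>e. Dg u) = (a+1)*A2"
  proof -
    have "(\<Sum>e\<in>E1. \<Sum>u\<in>e. Dg u) = (\<Sum>x\<in>V1. Dg x * D x)"
      using sum_swap_edges[OF finV1 finE1 sub1, of Dg] cE1 by simp
    also have "\<dots> = (\<Sum>x\<in>V1. (a+1) * (D x * D x))" by (rule sum.cong) (simp_all add: Dg1)
    finally show ?thesis unfolding A2_def by (simp add: sum_distrib_left)
  qed
  have E1q: "(\<Sum>e\<in>E1. \<Sum>u\<in>e. (Dg u)^2) = (a+1)^2*A3"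
  proof -
    have "(\<Sum>e\<in>E1. \<Sum>u\<in>e. (Dg u)^2) = (\<Sum>x\<in>V1. (Dg x)^2 * D x)"
      using sum_swap_edges[OF finV1 finE1 sub1, of "\<lambda>u. (Dg u)^2"] cE1 by simp
    also have "\<dots> = (\<Sum>x\<in>V1. (a+1)^2 * ((D x)^2 * D x))" by (rule sum.cong) (simp_all add: Dg1 power_mult_distrib)
    finally show ?thesis unfolding A3_def by (simp add: sum_distrib_left)
  qed
  have E1p: "(\<Sum>e\<in>E1. \<Prod>u\<in>e. Dg u) = (a+1)^2*S1"
  proof -
    have "(\<Sum>e\<in>E1. \<Prod>u\<in>e. Dg u) = (\<Sum>e\<in>E1. (a+1)^2 * (\<Prod>u\<in>e. D u))"
    proof (rule sum.cong[OF refl])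
      fix e assume "e \<in> E1"
      from bspec[OF e1 this] obtain u v where "u\<noteq>v" "u \<in> V1" "v \<in> V1" "e={u,v}" by blast
      thus "(\<Prod>u\<in>e. Dg u) = (a+1)^2 * (\<Prod>u\<in>e. D u)" by (simp add: Dg1 power2_eq_square)
    qed
    thus ?thesis unfolding S1_def by (simp add: sum_distrib_left)
  qed
  have E2s: "(\<Sum>e\<in>E2. \<Sum>u\<in>e. Dg u) = 2*(a+1)*b*m2"
  proof -
    have "(\<Sum>e\<in>E2. \<Sum>u\<in>e. Dg u) = (\<Sum>e\<in>E2. 2*(a+1)*b)"
    proof (rule sum.cong[OF refl])
      fix e assume "e \<in> E2"
      from bspec[OF e2 this] obtain u v where "u\<noteq>v" "u \<in> V2" "v \<in> V2" "e={u,v}" by blast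
      thus "(\<Sum>u\<in>e. Dg u) = 2*(a+1)*b" by (simp add: Dg2)
    qed
    thus ?thesis unfolding m2_def by simp
  qed
  have E2q: "(\<Sum>e\<in>E2. \<Sum>u\<in>e. (Dg u)^2) = 2*(a+1)^2*b^2*m2"
  proof -
    have "(\<Sum>e\<in>E2. \<Sum>u\<in>e. (Dg u)^2) = (\<Sum>e\<in>E2. 2*(a+1)^2*b^2)"
    proof (rule sum.cong[OF refl])
      fix e assume "e \<in> E2"
      from bspec[OF e2 this] obtain u v where "u\<noteq>v" "u \<in> V2" "v \<in> V2" "e={u,v}" by blast
      thus "(\<Sum>u\<in>e. (Dg u)^2) = 2*(a+1)^2*b^2" by (simp add: Dg2 power_mult_distrib)
    qed
    thus ?thesis unfolding m2_def by simp
  qed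
  have E2p: "(\<Sum>e\<in>E2. \<Prod>u\<in>e. Dg u) = (a+1)^2*b^2*m2"
  proof -
    have "(\<Sum>e\<in>E2. \<Prod>u\<in>e. Dg u) = (\<Sum>e\<in>E2. (a+1)^2*b^2)"
    proof (rule sum.cong[OF refl])
      fix e assume "e \<in> E2"
      from bspec[OF e2 this] obtain u v where "u\<noteq>v" "u \<in> V2" "v \<in> V2" "e={u,v}" by blast
      thus "(\<Prod>u\<in>e. Dg u) = (a+1)^2*b^2" by (simp add: Dg2 power2_eq_square)
    qed
    thus ?thesis unfolding m2_def by simp
  qed
  have swF: "(\<Sum>e\<in>F. \<Sum>u\<in>e. g u) = (\<Sum>x\<in>V1. g x * (a * D x)) + (\<Sum>x\<in>V2. g x * b)" for g
  proof -
    have "(\<Sum>e\<in>F. \<Sum>u\<in>e. g u) = (\<Sum>x\<in>V1. g x * real (card {e\<in>F. x\<in>e})) + (\<Sum>x\<in>V2. g x * real (card {e\<in>F. x\<in>e}))"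
      using sum_swap_edges[OF finV finF subF, of g] sumV by simp
    also have "\<dots> = (\<Sum>x\<in>V1. g x * (a * D x)) + (\<Sum>x\<in>V2. g x * b)"
      by (simp add: cF1 cF2)
    finally show ?thesis .
  qed
  have Fs: "(\<Sum>e\<in>F. \<Sum>u\<in>e. Dg u) = (a+1)*a*A2 + (a+1)*(b^2*n2)"
  proof -
    have "(\<Sum>x\<in>V1. Dg x * (a * D x)) = (\<Sum>x\<in>V1. (a+1)*a*(D x * D x))" by (rule sum.cong) (simp_all add: Dg1)
    moreover have "(\<Sum>x\<in>V2. Dg x * b) = (\<Sum>x\<in>V2. (a+1)*b^2)" by (rule sum.cong) (simp_all add: Dg2 power2_eq_square)
    ultimately show ?thesis using swF[of Dg] unfolding A2_def n2_def by (simp add: sum_distrib_left)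
  qed
  have Fq: "(\<Sum>e\<in>F. \<Sum>u\<in>e. (Dg u)^2) = (a+1)^2*a*A3 + (a+1)^2*(b^3*n2)"
  proof -
    have "(\<Sum>x\<in>V1. (Dg x)^2 * (a * D x)) = (\<Sum>x\<in>V1. (a+1)^2*a*((D x)^2 * D x))" by (rule sum.cong) (simp_all add: Dg1 power_mult_distrib)
    moreover have "(\<Sum>x\<in>V2. (Dg x)^2 * b) = (\<Sum>x\<in>V2. (a+1)^2*b^3)" by (rule sum.cong) (simp_all add: Dg2 power_mult_distrib power3_eq_cube power2_eq_square)
    ultimately show ?thesis using swF[of "\<lambda>u. (Dg u)^2"] unfolding A3_def n2_def by (simp add: sum_distrib_left)
  qed
  define \<phi> where "\<phi> x = (if x \<in> V1 then (a+1) * D x else 0)" for x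
  have Fp: "(\<Sum>e\<in>F. \<Prod>u\<in>e. Dg u) = (a+1)^2*a*b*A2"
  proof -
    have "(\<Sum>e\<in>F. \<Prod>u\<in>e. Dg u) = (\<Sum>e\<in>F. (a+1)*b*(\<Sum>u\<in>e. \<phi> u))"
    proof (rule sum.cong[OF refl])
      fix e assume "e \<in> F"
      from bspec[OF eF this] obtain u v where "u\<noteq>v" "u \<in> V1" "v \<in> V2" "e={u,v}" by blast
      moreover have "v \<notin> V1" using calculation disj by blast
      ultimately show "(\<Prod>u\<in>e. Dg u) = (a+1)*b*(\<Sum>u\<in>e. \<phi> u)" by (simp add: Dg1 Dg2 \<phi>_def)
    qed
    also have "\<dots> = (a+1)*b*(\<Sum>e\<in>F. \<Sum>u\<in>e. \<phi> u)" by (simp add: sum_distrib_left)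
    also have "(\<Sum>e\<in>F. \<Sum>u\<in>e. \<phi> u) = (\<Sum>x\<in>V1. (a+1)*a*(D x * D x))"
    proof -
      have "(\<Sum>x\<in>V1. \<phi> x * (a * D x)) = (\<Sum>x\<in>V1. (a+1)*a*(D x * D x))" by (rule sum.cong) (simp_all add: \<phi>_def)
      moreover have "(\<Sum>x\<in>V2. \<phi> x * b) = 0" using disj by (intro sum.neutral) (auto simp: \<phi>_def)
      ultimately show ?thesis using swF[of \<phi>] by simp
    qed
    finally show ?thesis unfolding A2_def by (simp add: sum_distrib_left power2_eq_square mult_ac)
  qed
  have fv: "f = b*n2"
  proof -
    define \<psi> where "\<psi> x = (if x \<in> V2 then (1::real) else 0)" for x
    have "(\<Sum>e\<in>F. \<Sum>u\<in>e. \<psi> u) = (\<Sum>e\<in>F. 1)"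
    proof (rule sum.cong[OF refl])
      fix e assume "e \<in> F"
      from bspec[OF eF this] obtain u v where "u\<noteq>v" "u \<in> V1" "v \<in> V2" "e={u,v}" by blast
      moreover have "u \<notin> V2" using calculation disj by blast
      ultimately show "(\<Sum>u\<in>e. \<psi> u) = 1" by (simp add: \<psi>_def)
    qed
    moreover have "(\<Sum>x\<in>V1. \<psi> x * (a * D x)) = 0" using disj by (intro sum.neutral) (auto simp: \<psi>_def)
    moreover have "(\<Sum>x\<in>V2. \<psi> x * b) = b * n2" unfolding n2_def by (simp add: \<psi>_def)
    ultimately show ?thesis using swF[of \<psi>] unfolding f_def by simp
  qed
  define m where "m = real (card E)"
  have mv: "m = (a+1)^2*m1"
  proof -
    have "m = m1 + m2 + f" unfolding m_def m1_def m2_def f_def using cardE by simp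
    thus ?thesis using m2v fv nb by (simp add: power2_eq_square algebra_simps)
  qed
  have mpos: "m > 0" using mv m1pos a1 by simp
  have bn2: "b^2*n2 = 2*a*b*m1"
  proof -
    have "b^2*n2 = b*(b*n2)" by (simp add: power2_eq_square)
    also have "\<dots> = b*(2*a*m1)" using nb by simp
    finally show ?thesis by simp
  qed
  have bn3: "b^3*n2 = 2*a*b^2*m1"
  proof -
    have "b^3*n2 = b^2*(b*n2)" by (simp add: power3_eq_cube power2_eq_square)
    also have "\<dots> = b^2*(2*a*m1)" using nb by simp
    finally show ?thesis by simp
  qed
  have A2v: "A2 = 2*T1" using T1A by simp
  have A3v: "A3 = 2*Q1" using Q1A by simp
  have HE: "(\<Sum>e\<in>E. (1/2) * (\<Sum>u\<in>e. Dg u)) = (a+1)^2*(T1 + a*b*m1)"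
  proof -
    have "(\<Sum>e\<in>E. (1/2) * (\<Sum>u\<in>e. Dg u)) = (1/2) * (\<Sum>e\<in>E. (\<Sum>u\<in>e. Dg u))"
      by (simp add: sum_distrib_left)
    also have "\<dots> = (1/2) * ((a+1)*A2 + 2*(a+1)*b*m2 + ((a+1)*a*A2 + (a+1)*(b^2*n2)))"
      using sumE[of "\<lambda>e. \<Sum>u\<in>e. Dg u"] E1s E2s Fs by (simp add: mult.assoc)
    also have "\<dots> = (1/2) * ((a+1)*(2*T1) + 2*(a+1)*b*(a^2*m1) + ((a+1)*a*(2*T1) + (a+1)*(2*a*b*m1)))"
      by (simp only: A2v m2v bn2)
    also have "\<dots> = (a+1)^2*(T1 + a*b*m1)"
      by (simp add: algebra_simps power2_eq_square)
    finally show ?thesis .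
  qed
  have PE: "(\<Sum>e\<in>E. \<Prod>u\<in>e. Dg u) = (a+1)^2*(S1 + a^2*b^2*m1 + 2*a*b*T1)"
  proof -
    have "(\<Sum>e\<in>E. \<Prod>u\<in>e. Dg u) = (a+1)^2*S1 + (a+1)^2*b^2*m2 + (a+1)^2*a*b*A2"
      using sumE[of "\<lambda>e. \<Prod>u\<in>e. Dg u"] E1p E2p Fp by simp
    also have "\<dots> = (a+1)^2*S1 + (a+1)^2*b^2*(a^2*m1) + (a+1)^2*a*b*(2*T1)"
      by (simp only: A2v m2v)
    also have "\<dots> = (a+1)^2*(S1 + a^2*b^2*m1 + 2*a*b*T1)"
      by (simp add: algebra_simps)
    finally show ?thesis .
  qed
  have QE: "(\<Sum>e\<in>E. (1/2) * (\<Sum>u\<in>e. (Dg u)^2)) = (a+1)^3*(Q1 + a*b^2*m1)"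
  proof -
    have "(\<Sum>e\<in>E. (1/2) * (\<Sum>u\<in>e. (Dg u)^2)) = (1/2) * (\<Sum>e\<in>E. (\<Sum>u\<in>e. (Dg u)^2))"
      by (simp add: sum_distrib_left)
    also have "\<dots> = (1/2) * ((a+1)^2*A3 + 2*(a+1)^2*b^2*m2 + ((a+1)^2*a*A3 + (a+1)^2*(b^3*n2)))"
      using sumE[of "\<lambda>e. \<Sum>u\<in>e. (Dg u)^2"] E1q E2q Fq by (simp add: mult.assoc)
    also have "\<dots> = (1/2) * ((a+1)^2*(2*Q1) + 2*(a+1)^2*b^2*(a^2*m1) + ((a+1)^2*a*(2*Q1) + (a+1)^2*(2*a*b^2*m1)))"
      by (simp only: A3v m2v bn3)
    also have "\<dots> = (a+1)^3*(Q1 + a*b^2*m1)"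
      by (simp add: algebra_simps power2_eq_square power3_eq_cube)
    finally show ?thesis .
  qed
  have ap: "(a+1)^2 \<noteq> 0" using a1 by simp
  have meanE: "mean_deg E = \<mu> + a*b"
  proof -
    have "mean_deg E = (\<Sum>e\<in>E. (1/2) * (\<Sum>u\<in>e. Dg u)) / m"
      unfolding mean_deg_def m_def Dg_def by simp
    also have "\<dots> = ((a+1)^2*(T1 + a*b*m1)) / ((a+1)^2*m1)" using HE mv by simp
    also have "\<dots> = (T1 + a*b*m1)/m1" using ap by simp
    also have "\<dots> = \<mu> + a*b" unfolding \<mu>_def using m1pos by (simp add: add_divide_distrib)
    finally show ?thesis .
  qed
  have numE: "assort_num E = 0"
  proof -
    have "assort_num E = (\<Sum>e\<in>E. \<Prod>u\<in>e. Dg u) / m - (mean_deg E)^2"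
      unfolding assort_num_def m_def Dg_def by simp
    also have "(\<Sum>e\<in>E. \<Prod>u\<in>e. Dg u) / m = (S1 + a^2*b^2*m1 + 2*a*b*T1)/m1"
      using PE mv ap by simp
    also have "\<dots> = S1/m1 + a^2*b^2 + 2*a*b*\<mu>"
      unfolding \<mu>_def using m1pos by (simp add: add_divide_distrib)
    also have "S1/m1 = \<mu>^2" using S1v unfolding \<mu>_def .
    also have "\<mu>^2 + a^2*b^2 + 2*a*b*\<mu> - (mean_deg E)^2 = 0"
      using meanE by (simp add: power2_eq_square algebra_simps)
    finally show ?thesis .
  qed
  have denE: "assort_den E > 0"
  proof -
    define q where "q = Q1/m1"
    have "assort_den E = (\<Sum>e\<in>E. (1/2) * (\<Sum>u\<in>e. (Dg u)^2)) / m - (mean_deg E)^2"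
      unfolding assort_den_def m_def Dg_def by simp
    also have "(\<Sum>e\<in>E. (1/2) * (\<Sum>u\<in>e. (Dg u)^2)) / m = ((a+1)^2*((a+1)*(Q1 + a*b^2*m1))) / ((a+1)^2*m1)"
      using QE mv by (simp add: power3_eq_cube power2_eq_square mult.assoc)
    also have "\<dots> = (a+1)*(Q1 + a*b^2*m1)/m1" using ap by simp
    also have "\<dots> = (a+1)*(q + a*b^2)"
      unfolding q_def using m1pos by (simp add: field_simps)
    also have "(a+1)*(q + a*b^2) - (mean_deg E)^2 = (q - \<mu>^2) + a*(q - \<mu>^2) + a*(\<mu> - b)^2"
      using meanE by (simp add: power2_eq_square algebra_simps)
    finally have eq: "assort_den E = (q - \<mu>^2) + a*(q - \<mu>^2) + a*(\<mu> - b)^2" .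
    have "q - \<mu>^2 > 0" using CS den1nz unfolding q_def \<mu>_def by linarith
    moreover have "a*(q - \<mu>^2) \<ge> 0" using calculation a1 by simp
    moreover have "a*(\<mu> - b)^2 \<ge> 0" using a1 by simp
    ultimately show ?thesis using eq by linarith
  qed
  have "card E \<ge> 1" using cardE neut unfolding neutral_def by simp
  thus ?thesis using numE denE unfolding neutral_def assortativity_def E_def[symmetric] by simp
qed

end
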